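(* Let $L_1',L_2'\subseteq\mathcal{P}$ be simple event logs, $bk\in\mathcal{A}^*$, $n\in\mathbb{N}_{\ge1}$, $M_1=ms^{L_1',n}(bk)$ and $M_2=ms^{L_2',n}(bk)$. Let $CG(M_1,M_2)$ be the set of pairs $(g_1',g_2')$ where $g_1'$ is a group of $M_1$, $g_2'$ is a group of $M_2$, and $g_1'\overset{n}{\sim}g_2'$, and set $F(M_1,M_2)=\sum_{(g_1',g_2')\in CG(M_1,M_2)}\big(|g_1'|-\min(|g_1'|,|g_2'|)\big)$. Then for every linker $f$ (w.r.t. $n$) from $L_1'$ to $L_2'$, at least $F(M_1,M_2)$ elements $p_1'\in M_1$ satisfy $f(p_1')\notin M_2$; more precisely, for each $(g_1',g_2')\in CG(M_1,M_2)$, at least $|g_1'|-\min(|g_1'|,|g_2'|)$ elements of $g_1'$ are not mapped by $f$ into $M_2$.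
   Context: $\mathcal{P}=\mathcal{C}\times\mathcal{A}^*\times\mathcal{S}$ is the set of simple process instances $p=(c,\sigma,s)$ (case id, sequence of activities, sensitive value) with projections $\pi_c,\pi_\sigma,\pi_s$; a simple event log is a finite $L\subseteq\mathcal{P}$ in which elements with equal case ids are equal. $\sqsubseteq$ is the (not necessarily contiguous) subsequence relation; $pref(\langle a_1,\dots,a_m\rangle)=\{\langle a_1,\dots,a_k\rangle\mid 1\le k\le m\}$; $LCS(\sigma_1,\sigma_2)$ is the set of longest common subsequences, $LCS^{\sigma_1}_{\sigma_2}$ their length, and $SCS^{\sigma_1}_{\sigma_2}$ the length of a shortest common super-sequence. Specialization: $p'\preceq_n p$ iff $\pi_\sigma(p')\sqsubseteq\pi_\sigma(p)$, $|\pi_\sigma(p)|\le|\pi_\sigma(p')|+n$, and $\pi_s(p)=\pi_s(p')$. Matching set: $ms^{L',n}(bk)=\{p'\in L'\mid \exists p\in\mathcal{P}: p'\preceq_n p \wedge bk\sqsubseteq\pi_\sigma(p)\}$. A group of a matching set $M$ is a nonempty set of the form $\{p\in M\mid \pi_s(p)=v\}$ for some $v\in\mathcal{S}$. Linker: a total injective function $f:L_1'\to L_2'$ such that for every $p_1'\in L_1'$ there exist $p_1,p_2\in\mathcal{P}$ with $p_1'\preceq_n p_1$, $f(p_1')\preceq_n p_2$, $\pi_s(p_1)=\pi_s(p_2)$, and $\pi_\sigma(p_1)\in pref(\pi_\sigma(p_2))$. Comparable sequences: $\sigma_1\overset{n}{\sim}\sigma_2$ iff $n\ge|\sigma_1|-LCS^{\sigma_1}_{\sigma_2}$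 in case some $\sigma\in LCS(\sigma_1,\sigma_2)$ lies in $pref(\sigma_2)$, and $n\ge SCS^{\sigma_1}_{\sigma_2}-\min(|\sigma_1|,|\sigma_2|)$ otherwise. Comparable process instances: $p_1\overset{n}{\sim}p_2$ iff $\pi_s(p_1)=\pi_s(p_2)$ and $\pi_\sigma(p_1)\overset{n}{\sim}\pi_\sigma(p_2)$. Comparable groups: $g_1'\overset{n}{\sim}g_2'$ iff $p_1'\overset{n}{\sim}p_2'$ for all $p_1'\in g_1'$, $p_2'\in g_2'$. *)

theory Defs
  imports Main "HOL-Library.Sublist"
begin

type_synonym ('c,'a,'s) pinst = "'c \<times> 'a list \<times> 's"

definition pc :: "('c,'a,'s) pinst \<Rightarrow> 'c" where "pc p = fst p"
definition pseq :: "('c,'a,'s) pinst \<Rightarrow> 'a list" where "pseq p = fst (snd p)"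
definition psens :: "('c,'a,'s) pinst \<Rightarrow> 's" where "psens p = snd (snd p)"

definition simple_log :: "('c,'a,'s) pinst set \<Rightarrow> bool" where
  "simple_log L \<longleftrightarrow> finite L \<and> (\<forall>p\<in>L. \<forall>q\<in>L. pc p = pc q \<longrightarrow> p = q)"

definition pref :: "'a list \<Rightarrow> 'a list set" where
  "pref xs = {take k xs | k. 1 \<le> k \<and> k \<le> length xs}"

definition LCS :: "'a list \<Rightarrow> 'a list \<Rightarrow> 'a list set" where
  "LCS s1 s2 = {s. subseq s s1 \<and> subseq s s2 \<and>
                  (\<forall>t. subseq t s1 \<and> subseq t s2 \<longrightarrow> length t \<le> length s)}"

definition LCS_len :: "'a list \<Rightarrow> 'a list \<Rightarrow> nat" where
  "LCS_len s1 s2 = Max {length s | s. subseq s s1 \<and> subseq s s2}"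

definition SCS_len :: "'a list \<Rightarrow> 'a list \<Rightarrow> nat" where
  "SCS_len s1 s2 = (LEAST k. \<exists>s. subseq s1 s \<and> subseq s2 s \<and> length s = k)"

definition spec :: "nat \<Rightarrow> ('c,'a,'s) pinst \<Rightarrow> ('c,'a,'s) pinst \<Rightarrow> bool" where
  "spec n p' p \<longleftrightarrow> subseq (pseq p') (pseq p) \<and> length (pseq p) \<le> length (pseq p') + n
                   \<and> psens p = psens p'"

definition ms :: "('c,'a,'s) pinst set \<Rightarrow> nat \<Rightarrow> 'a list \<Rightarrow> ('c,'a,'s) pinst set" where
  "ms L n bk = {p'\<in>L. \<exists>p. spec n p' p \<and> subseq bk (pseq p)}"

definition is_group :: "('c,'a,'s) pinst set \<Rightarrow> ('c,'a,'s) pinst set \<Rightarrow> bool" where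
  "is_group M g \<longleftrightarrow> g \<noteq> {} \<and> (\<exists>v. g = {p\<in>M. psens p = v})"

definition linker :: "nat \<Rightarrow> ('c,'a,'s) pinst set \<Rightarrow> ('c,'a,'s) pinst set
                      \<Rightarrow> (('c,'a,'s) pinst \<Rightarrow> ('c,'a,'s) pinst) \<Rightarrow> bool" where
  "linker n L1 L2 f \<longleftrightarrow> f ` L1 \<subseteq> L2 \<and> inj_on f L1 \<and>
     (\<forall>p1'\<in>L1. \<exists>p1 p2. spec n p1' p1 \<and> spec n (f p1') p2 \<and> psens p1 = psens p2
                       \<and> pseq p1 \<in> pref (pseq p2))"

definition comp_seq :: "nat \<Rightarrow> 'a list \<Rightarrow> 'a list \<Rightarrow> bool" where
  "comp_seq n s1 s2 \<longleftrightarrow>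
     (if \<exists>s\<in>LCS s1 s2. s \<in> pref s2
      then n \<ge> length s1 - LCS_len s1 s2
      else n \<ge> SCS_len s1 s2 - min (length s1) (length s2))"

definition comp_pi :: "nat \<Rightarrow> ('c,'a,'s) pinst \<Rightarrow> ('c,'a,'s) pinst \<Rightarrow> bool" where
  "comp_pi n p1 p2 \<longleftrightarrow> psens p1 = psens p2 \<and> comp_seq n (pseq p1) (pseq p2)"

definition comp_group :: "nat \<Rightarrow> ('c,'a,'s) pinst set \<Rightarrow> ('c,'a,'s) pinst set \<Rightarrow> bool" where
  "comp_group n g1 g2 \<longleftrightarrow> (\<forall>p1\<in>g1. \<forall>p2\<in>g2. comp_pi n p1 p2)"

definition CG :: "nat \<Rightarrow> ('c,'a,'s) pinst set \<Rightarrow> ('c,'a,'s) pinst set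
                  \<Rightarrow> (('c,'a,'s) pinst set \<times> ('c,'a,'s) pinst set) set" where
  "CG n M1 M2 = {(g1, g2). is_group M1 g1 \<and> is_group M2 g2 \<and> comp_group n g1 g2}"

definition Fcount :: "nat \<Rightarrow> ('c,'a,'s) pinst set \<Rightarrow> ('c,'a,'s) pinst set \<Rightarrow> nat" where
  "Fcount n M1 M2 = (\<Sum>(g1, g2)\<in>CG n M1 M2. card g1 - min (card g1) (card g2))"

end

theory Submission
  imports Defs
begin

lemma group_val:
  assumes "is_group M g" "p \<in> g"
  shows "g = {q\<in>M. psens q = psens p}"
  using assms unfolding is_group_def by auto

lemma CG_sens:
  assumes "(g1,g2) \<in> CG n M1 M2"
  shows "\<forall>p\<in>g1. g2 = {q\<in>M2. psens q = psens p}"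
proof -
  have g1: "is_group M1 g1" and g2: "is_group M2 g2" and c: "comp_group n g1 g2"
    using assms unfolding CG_def by auto
  obtain p1 where p1: "p1 \<in> g1" using g1 unfolding is_group_def by auto
  obtain p2 where p2: "p2 \<in> g2" using g2 unfolding is_group_def by auto
  have e: "psens p2 = psens p1" using c p1 p2 unfolding comp_group_def comp_pi_def by auto
  have "\<forall>p\<in>g1. psens p = psens p1" using group_val[OF g1 p1] by auto
  then show ?thesis using group_val[OF g2 p2] e by auto
qed

theorem theorem3:
  fixes L1 L2 :: "('c,'a,'s) pinst set" and bk :: "'a list" and n :: nat
    and f :: "('c,'a,'s) pinst \<Rightarrow> ('c,'a,'s) pinst"
  assumes "simple_log L1" and "simple_log L2" and "n \<ge> 1"
    and "linker n L1 L2 f"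
  shows "Fcount n (ms L1 n bk) (ms L2 n bk) \<le> card {p\<in>ms L1 n bk. f p \<notin> ms L2 n bk}
       \<and> (\<forall>(g1, g2)\<in>CG n (ms L1 n bk) (ms L2 n bk).
            card g1 - min (card g1) (card g2) \<le> card {p\<in>g1. f p \<notin> ms L2 n bk})"
proof -
  define M1 where "M1 = ms L1 n bk"
  define M2 where "M2 = ms L2 n bk"
  have M1L: "M1 \<subseteq> L1" and M2L: "M2 \<subseteq> L2" unfolding M1_def M2_def ms_def by auto
  have fin1: "finite M1" and fin2: "finite M2"
    using assms(1,2) M1L M2L finite_subset unfolding simple_log_def by auto
  have injf: "inj_on f L1" using assms(4) unfolding linker_def by auto
  have sensf: "psens (f p) = psens p" if "p \<in> L1" for p
    using assms(4) that unfolding linker_def spec_def by force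
  define B where "B g = {p\<in>g. f p \<notin> M2}" for g
  have pair: "card g1 - min (card g1) (card g2) \<le> card (B g1)" if "(g1,g2) \<in> CG n M1 M2" for g1 g2
  proof -
    have g1: "is_group M1 g1" using that unfolding CG_def by auto
    have g1M: "g1 \<subseteq> M1" using g1 unfolding is_group_def by auto
    have fing1: "finite g1" using g1M fin1 finite_subset by auto
    have g2M: "g2 \<subseteq> M2" using that unfolding CG_def is_group_def by auto
    have fing2: "finite g2" using g2M fin2 finite_subset by auto
    define A where "A = {p\<in>g1. f p \<in> M2}"
    have "f ` A \<subseteq> g2"
    proof
      fix y assume "y \<in> f ` A"
      then obtain p where p: "p \<in> A" "y = f p" by auto
      have "p \<in> g1" "p \<in> L1" using p g1M M1L unfolding A_def by auto
      have "g2 = {q\<in>M2. psens q = psens p}" using CG_sens[OF that] \<open>p \<in> g1\<close> by blast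
      moreover have "f p \<in> M2" using p unfolding A_def by auto
      ultimately show "y \<in> g2" using p(2) sensf[OF \<open>p \<in> L1\<close>] by auto
    qed
    moreover have "inj_on f A" using injf g1M M1L unfolding A_def by (auto intro: inj_on_subset)
    ultimately have "card A \<le> card g2" using fing2 card_inj_on_le by blast
    moreover have "card g1 = card A + card (B g1)"
    proof -
      have "g1 = A \<union> B g1" "A \<inter> B g1 = {}" unfolding A_def B_def by auto
      then show ?thesis using fing1 card_Un_disjoint
        by (metis finite_Un)
    qed
    ultimately show ?thesis by linarith
  qed
  have finCG: "finite (CG n M1 M2)"
  proof (rule finite_subset)
    show "CG n M1 M2 \<subseteq> Pow M1 \<times> Pow M2"
      unfolding CG_def is_group_def by auto
    show "finite (Pow M1 \<times> Pow M2)" using fin1 fin2 by auto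
  qed
  have injfst: "inj_on fst (CG n M1 M2)"
  proof (rule inj_onI)
    fix x y assume x: "x \<in> CG n M1 M2" and y: "y \<in> CG n M1 M2" and e: "fst x = fst y"
    obtain a b where ab: "x = (a,b)" by force
    obtain c d where cd: "y = (c,d)" by force
    have "a \<noteq> {}" using x ab unfolding CG_def is_group_def by auto
    then obtain p where "p \<in> a" by auto
    moreover have "a = c" using ab cd e by simp
    moreover have "(a,b) \<in> CG n M1 M2" "(c,d) \<in> CG n M1 M2" using x y ab cd by auto
    ultimately have "b = {q\<in>M2. psens q = psens p}" "d = {q\<in>M2. psens q = psens p}"
      using CG_sens[of a b] CG_sens[of c d] by blast+
    then show "x = y" using ab cd \<open>a = c\<close> by simp
  qed
  have "Fcount n M1 M2 \<le> (\<Sum>(g1,g2)\<in>CG n M1 M2. card (B g1))"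
    unfolding Fcount_def by (rule sum_mono) (use pair in auto)
  also have "\<dots> = (\<Sum>g1\<in>fst ` CG n M1 M2. card (B g1))"
    using sum.reindex[OF injfst, of "\<lambda>g. card (B g)"] by (simp add: case_prod_beta)
  also have "\<dots> = card (\<Union>g1\<in>fst ` CG n M1 M2. B g1)"
  proof (rule card_UN_disjoint[symmetric])
    show "finite (fst ` CG n M1 M2)" using finCG by auto
    show "\<forall>i\<in>fst ` CG n M1 M2. finite (B i)"
    proof
      fix i assume "i \<in> fst ` CG n M1 M2"
      then obtain j where "(i,j) \<in> CG n M1 M2" by force
      then have "is_group M1 i" unfolding CG_def by auto
      then have "i \<subseteq> M1" unfolding is_group_def by auto
      then have "B i \<subseteq> M1" unfolding B_def by auto
      then show "finite (B i)" using finite_subset fin1 by auto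
    qed
    show "\<forall>i\<in>fst ` CG n M1 M2. \<forall>j\<in>fst ` CG n M1 M2. i \<noteq> j \<longrightarrow> B i \<inter> B j = {}"
    proof (intro ballI impI)
      fix i j assume i: "i \<in> fst ` CG n M1 M2" and j: "j \<in> fst ` CG n M1 M2" and ne: "i \<noteq> j"
      obtain i' where "(i,i') \<in> CG n M1 M2" using i by force
      then have gi: "is_group M1 i" unfolding CG_def by auto
      obtain j' where "(j,j') \<in> CG n M1 M2" using j by force
      then have gj: "is_group M1 j" unfolding CG_def by auto
      show "B i \<inter> B j = {}"
      proof (rule ccontr)
        assume "B i \<inter> B j \<noteq> {}"
        then obtain p where "p \<in> i" "p \<in> j" unfolding B_def by auto
        then have "i = {q\<in>M1. psens q = psens p}" "j = {q\<in>M1. psens q = psens p}"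
          using group_val[OF gi \<open>p \<in> i\<close>] group_val[OF gj \<open>p \<in> j\<close>] by auto
        then show False using ne by simp
      qed
    qed
  qed
  also have "\<dots> \<le> card {p\<in>M1. f p \<notin> M2}"
  proof (rule card_mono)
    show "finite {p\<in>M1. f p \<notin> M2}" using fin1 by auto
    show "(\<Union>g1\<in>fst ` CG n M1 M2. B g1) \<subseteq> {p\<in>M1. f p \<notin> M2}"
    proof
      fix x assume "x \<in> (\<Union>g1\<in>fst ` CG n M1 M2. B g1)"
      then obtain g h where gh: "(g,h) \<in> CG n M1 M2" "x \<in> B g" by force
      then have "is_group M1 g" unfolding CG_def by auto
      then show "x \<in> {p\<in>M1. f p \<notin> M2}" using gh(2) unfolding is_group_def B_def by auto
    qed
  qed
  finally have fc: "Fcount n M1 M2 \<le> card {p\<in>M1. f p \<notin> M2}" .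
  have pw: "\<forall>(g1, g2)\<in>CG n M1 M2. card g1 - min (card g1) (card g2) \<le> card {p\<in>g1. f p \<notin> M2}"
    using pair unfolding B_def by auto
  show ?thesis using fc pw unfolding M1_def M2_def by blast
qed

end
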